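(* Let $\mathbb{T} = \mathbb{R}^2 / 2\pi\mathbb{Z}^2$ be the flat torus with coordinates $(x,y)$, and let $\alpha, \beta \in \mathbb{R}$ with $\alpha/\beta$ irrational. Let $X$ be the vector field on $\mathbb{T}$ whose flow is the irrational winding $\psi_t(x,y) = (x + \alpha t, y + \beta t)$. Let $G: \mathbb{T} \to \mathbb{R}$ be smooth with Fourier expansion \[G(x,y) = \sum_{(n,m) \in \mathbb{Z}^2} \hat{G}(n,m) \exp(i(nx + my)),\] and let $\operatorname{Supp}\hat{G} = \{(n,m) \in \mathbb{Z}^2 : \hat{G}(n,m) \neq 0\}$. Then $G$ is a good observation for $X$ if and only if $\operatorname{Supp}\hat{G}$ generates $\mathbb{Z}^2$ as an abelian group.
   Context: $\hat{G}(n,m) \in \mathbb{C}$ denotes the $(n,m)$-th Fourier coefficient of $G$. For a smooth function $G$ on a compact manifold $M$ and a vector field $X$ with flow $\psi_t$, the Takens map $\Psi^N_\tau: M \to \mathbb{R}^{N+1}$ is $\Psi^N_\tau(p) = (G(p), G(\psi_\tau(p)), G(\psi_{2\tau}(p)), \ldots, G(\psi_{N\tau}(p)))$; $G$ is called a good observation for $X$ if there exist an integer $N > 0$ and $\tau > 0$ such that $\Psi^N_\tau$ is a (smooth) embedding. *)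

theory Defs
  imports "HOL-Analysis.Analysis"
begin

text \<open>Functions on the torus T = R^2 / 2 pi Z^2 are represented as functions on
  real \<times> real that are 2 pi-periodic in each coordinate.\<close>

definition torus_periodic :: "(real \<times> real \<Rightarrow> 'b) \<Rightarrow> bool" where
  "torus_periodic G \<longleftrightarrow>
     (\<forall>x y. G (x + 2*pi, y) = G (x, y) \<and> G (x, y + 2*pi) = G (x, y))"

definition torus_eq :: "real \<times> real \<Rightarrow> real \<times> real \<Rightarrow> bool" where
  "torus_eq p q \<longleftrightarrow>
     (\<exists>m n :: int. fst p - fst q = 2 * pi * (of_int m) \<and> snd p - snd q = 2 * pi * (of_int n))"

text \<open>C-infinity smoothness on R^2: differentiable everywhere, with both partial
  derivatives again C-infinity (greatest fixed point = derivatives of all orders).\<close>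
coinductive smooth2 :: "(real \<times> real \<Rightarrow> real) \<Rightarrow> bool" where
  "(\<And>p. (f has_derivative (\<lambda>h. fst h * fx p + snd h * fy p)) (at p))
    \<Longrightarrow> smooth2 fx \<Longrightarrow> smooth2 fy \<Longrightarrow> smooth2 f"

definition lin_flow :: "real \<Rightarrow> real \<Rightarrow> real \<Rightarrow> real \<times> real \<Rightarrow> real \<times> real" where
  "lin_flow a b t p = (fst p + a * t, snd p + b * t)"

definition fourier_coeff :: "(real \<times> real \<Rightarrow> real) \<Rightarrow> int \<Rightarrow> int \<Rightarrow> complex" where
  "fourier_coeff G n m =
     integral (cbox (0, 0) (2*pi, 2*pi))
       (\<lambda>p. complex_of_real (G p) * exp (- \<i> * complex_of_real (of_int n * fst p + of_int m * snd p)))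
     / complex_of_real (4 * pi^2)"

definition fourier_support :: "(real \<times> real \<Rightarrow> real) \<Rightarrow> (int \<times> int) set" where
  "fourier_support G = {(n, m). fourier_coeff G n m \<noteq> 0}"

inductive_set zgen :: "(int \<times> int) set \<Rightarrow> (int \<times> int) set" for S where
  zgen_zero: "0 \<in> zgen S"
| zgen_gen: "s \<in> S \<Longrightarrow> s \<in> zgen S"
| zgen_diff: "a \<in> zgen S \<Longrightarrow> b \<in> zgen S \<Longrightarrow> a - b \<in> zgen S"

text \<open>Takens map Psi^N_tau(p) = (G(p), G(psi_tau p), ..., G(psi_{N tau} p)) is a smooth
  embedding of the torus (compact, so = injective immersion): injective on torus
  points and with injective differential at every point.\<close>
definition takens_embedding ::
    "(real \<times> real \<Rightarrow> real) \<Rightarrow> real \<Rightarrow> real \<Rightarrow> nat \<Rightarrow> real \<Rightarrow> bool" where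
  "takens_embedding G a b N \<tau> \<longleftrightarrow>
     (\<forall>p q. (\<forall>k\<le>N. G (lin_flow a b (real k * \<tau>) p) = G (lin_flow a b (real k * \<tau>) q))
              \<longrightarrow> torus_eq p q)
   \<and> (\<forall>p h. h \<noteq> 0 \<longrightarrow>
        (\<exists>k\<le>N. frechet_derivative G (at (lin_flow a b (real k * \<tau>) p)) h \<noteq> 0))"

definition good_observation :: "(real \<times> real \<Rightarrow> real) \<Rightarrow> real \<Rightarrow> real \<Rightarrow> bool" where
  "good_observation G a b \<longleftrightarrow> (\<exists>N>0. \<exists>\<tau>>0. takens_embedding G a b N \<tau>)"

end

theory Submission
  imports Defs
begin

lemma per_x:
  assumes "torus_periodic G"
  shows "G (x + 2 * pi* of_int m, y) = G (x, y)"
proof -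
  have "\<forall>x. G (x + 2 * pi* of_int m, y) = G (x, y)"
  proof (induction m rule: int_induct[where k=0])
    case base then show ?case by simp
  next
    case (step1 i)
    show ?case
    proof
      fix x
      have "G (x + 2 * pi* of_int (i+1), y) = G ((x + 2 * pi* of_int i) + 2 * pi, y)"
        by (simp add: algebra_simps)
      also have "\<dots> = G (x + 2 * pi* of_int i, y)" using assms by (simp add: torus_periodic_def)
      finally show "G (x + 2 * pi* of_int (i+1), y) = G (x, y)" using step1 by simp
    qed
  next
    case (step2 i)
    show ?case
    proof
      fix x
      have "G (x + 2 * pi* of_int (i-1), y) = G ((x + 2 * pi* of_int (i-1)) + 2 * pi, y)"
        using assms by (simp add: torus_periodic_def)
      also have "\<dots> = G (x + 2 * pi* of_int i, y)" by (simp add: algebra_simps)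
      finally show "G (x + 2 * pi* of_int (i-1), y) = G (x, y)" using step2 by simp
    qed
  qed
  then show ?thesis by blast
qed

lemma per_y:
  assumes "torus_periodic G"
  shows "G (x, y + 2 * pi* of_int m) = G (x, y)"
proof -
  have "torus_periodic (\<lambda>(a,b). G (b,a))" using assms by (simp add: torus_periodic_def)
  from per_x[OF this, of y m x] show ?thesis by simp
qed

lemma per_xy:
  assumes "torus_periodic G"
  shows "G (x + 2 * pi* of_int m, y + 2 * pi* of_int n) = G (x, y)"
  using per_x[OF assms] per_y[OF assms] by simp

lemma per_int_shift:
  assumes "torus_periodic G"
  shows "G (z + (2 * pi* of_int m, 2 * pi* of_int n)) = G z"
  using per_xy[OF assms, of "fst z" m "snd z" n] by (cases z) simp

lemma periodic_1d_int:
  fixes f :: "real \<Rightarrow> 'a"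
  assumes "\<And>x. f (x + 2 * pi) = f x"
  shows "f (x + 2 * pi* of_int m) = f x"
proof -
  have "torus_periodic (\<lambda>(a,b). f a)" using assms by (simp add: torus_periodic_def)
  from per_x[OF this, of x m 0] show ?thesis by simp
qed

lemma periodic_integral_shift:
  fixes f :: "real \<Rightarrow> complex"
  assumes cont: "continuous_on UNIV f" and per: "\<And>x. f (x + 2 * pi) = f x"
  shows "integral {0..2 * pi} (\<lambda>x. f (x + a)) = integral {0..2 * pi} f"
proof -
  define k where "k = \<lfloor>a / (2 * pi)\<rfloor>"
  define b where "b = a - 2 * pi* of_int k"
  have b0: "0 \<le> b" and b1: "b \<le> 2 * pi"
  proof -
    have "of_int k \<le> a/(2 * pi)" "a/(2 * pi) < of_int k + 1" unfolding k_def by linarith+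
    then have "2 * pi* of_int k \<le> a" "a < 2 * pi*(of_int k + 1)"
      by (simp_all add: field_simps)
    then show "0 \<le> b" "b \<le> 2 * pi" unfolding b_def by (simp_all add: algebra_simps)
  qed
  have intf: "f integrable_on {c..d}" for c d
    by (rule integrable_continuous_real, rule continuous_on_subset[OF cont]) simp
  have "(\<lambda>x. f (x + a)) = (\<lambda>x. f (x + b))"
  proof
    fix x show "f (x + a) = f (x + b)"
      using periodic_1d_int[of f "x+b" k, OF per] unfolding b_def by (simp add: algebra_simps)
  qed
  then have "integral {0..2 * pi} (\<lambda>x. f (x + a)) = integral {0..2 * pi} (f \<circ> ((+) b))"
    by (simp add: o_def add.commute)
  also have "\<dots> = integral {b..2 * pi+b} f"
    using integral_shift_Icc_real[of 0 "2 * pi" f b] by (simp add: add.commute)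
  also have "\<dots> = integral {b..2 * pi} f + integral {2 * pi..2 * pi+b} f"
    using Henstock_Kurzweil_Integration.integral_combine[where a=b and c="2*pi" and b="2*pi+b" and f=f, OF _ _ intf] b0 b1 by simp
  also have "integral {2 * pi..2 * pi+b} f = integral {0..b} (f \<circ> ((+) (2 * pi)))"
    using integral_shift_Icc_real[of 0 b f "2 * pi"] by (simp add: add.commute)
  also have "f \<circ> ((+) (2 * pi)) = f" using per by (auto simp: o_def add.commute)
  also have "integral {b..2 * pi} f + integral {0..b} f = integral {0..2 * pi} f"
    using Henstock_Kurzweil_Integration.integral_combine[where a=0 and c=b and b="2*pi" and f=f, OF _ _ intf] b0 b1 by (metis add.commute)
  finally show ?thesis .
qed


lemma exp_shift_int: "exp (z + 2 * complex_of_real pi * \<i> * of_int k) = exp z"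
  by (subst exp_eq) (rule exI[of _ k], simp add: algebra_simps)

lemma periodic_integral_shift2:
  fixes F :: "real \<times> real \<Rightarrow> complex"
  assumes cont: "continuous_on UNIV F" and per: "torus_periodic F"
  shows "integral (cbox (0,0) (2*pi,2*pi)) (\<lambda>z. F (z + w)) = integral (cbox (0,0) (2*pi,2*pi)) F"
proof -
  obtain w1 w2 where w: "w = (w1, w2)" by (cases w)
  have contF: "continuous_on S F" for S using cont continuous_on_subset by blast
  have cF1: "continuous_on S (\<lambda>z. F (z + (a,b)))" for S a b
    by (rule continuous_on_subset[of UNIV]) (auto intro!: continuous_intros continuous_on_compose2[OF cont])
  have eqF: "(\<lambda>(x, y). F (x + a, y + b)) = (\<lambda>z. F (z + (a,b)))" for a b by auto
  have cF2: "continuous_on S (\<lambda>(x, y). F (x + a, y + b))" for S a b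
    unfolding eqF by (rule cF1)
  have "integral (cbox (0,0) (2*pi,2*pi)) (\<lambda>z. F (z + w))
      = integral {0..2*pi} (\<lambda>x. integral {0..2*pi} (\<lambda>y. F (x + w1, y + w2)))"
    using integral_prod_continuous[of 0 0 "2*pi" "2*pi" "\<lambda>z. F (z + w)"] cF1[of _ w1 w2]
    by (simp add: w case_prod_unfold)
  also have "\<dots> = integral {0..2*pi} (\<lambda>x. integral {0..2*pi} (\<lambda>y. F (x + w1, y)))"
  proof (rule integral_cong)
    fix x
    show "integral {0..2*pi} (\<lambda>y. F (x + w1, y + w2)) = integral {0..2*pi} (\<lambda>y. F (x + w1, y))"
      by (rule periodic_integral_shift[where f="\<lambda>y. F (x + w1, y)"])
         (auto intro!: continuous_intros continuous_on_compose2[OF cont] simp: per[unfolded torus_periodic_def])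
  qed
  also have "\<dots> = integral {0..2*pi} (\<lambda>y. integral {0..2*pi} (\<lambda>x. F (x + w1, y)))"
    using integral_swap_continuous[of 0 0 "2*pi" "2*pi" "\<lambda>x y. F (x + w1, y)"] cF2[of _ w1 0]
    by simp
  also have "\<dots> = integral {0..2*pi} (\<lambda>y. integral {0..2*pi} (\<lambda>x. F (x, y)))"
  proof (rule integral_cong)
    fix y
    show "integral {0..2*pi} (\<lambda>x. F (x + w1, y)) = integral {0..2*pi} (\<lambda>x. F (x, y))"
      by (rule periodic_integral_shift[where f="\<lambda>x. F (x, y)"])
         (auto intro!: continuous_intros continuous_on_compose2[OF cont] simp: per[unfolded torus_periodic_def])
  qed
  also have "\<dots> = integral {0..2*pi} (\<lambda>x. integral {0..2*pi} (\<lambda>y. F (x, y)))"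
    using integral_swap_continuous[of 0 0 "2*pi" "2*pi" "\<lambda>x y. F (x, y)"] cF2[of _ 0 0]
    by simp
  also have "\<dots> = integral (cbox (0,0) (2*pi,2*pi)) F"
    using integral_prod_continuous[of 0 0 "2*pi" "2*pi" F] contF by simp
  finally show ?thesis .
qed

lemma smooth2_has_derivative:
  assumes "smooth2 G"
  obtains gx gy where "\<And>p. (G has_derivative (\<lambda>h. fst h * gx p + snd h * gy p)) (at p)"
    "smooth2 gx" "smooth2 gy"
  using assms by (cases rule: smooth2.cases) blast

lemma smooth2_continuous:
  assumes "smooth2 G"
  shows "continuous_on UNIV G"
proof -
  obtain gx gy where d: "\<And>p. (G has_derivative (\<lambda>h. fst h * gx p + snd h * gy p)) (at p)"
    using smooth2_has_derivative[OF assms] by blast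
  show ?thesis
    by (rule continuous_at_imp_continuous_on) (use d has_derivative_continuous in blast)
qed

definition ip :: "int \<Rightarrow> int \<Rightarrow> real \<times> real \<Rightarrow> real" where
  "ip n m p = of_int n * fst p + of_int m * snd p"

lemma fourier_coeff_ip:
  "fourier_coeff G n m = integral (cbox (0, 0) (2*pi, 2*pi))
       (\<lambda>p. complex_of_real (G p) * exp (- \<i> * complex_of_real (ip n m p))) / complex_of_real (4 * pi^2)"
  by (simp add: fourier_coeff_def ip_def)

lemma ip_add: "ip n m (p + q) = ip n m p + ip n m q"
  by (simp add: ip_def algebra_simps)

lemma fourier_coeff_shift:
  assumes cont: "continuous_on UNIV G" and per: "torus_periodic G"
  shows "fourier_coeff (\<lambda>z. G (z + w)) n m = exp (\<i> * complex_of_real (ip n m w)) * fourier_coeff G n m"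
proof -
  define F where "F = (\<lambda>p. complex_of_real (G p) * exp (- \<i> * complex_of_real (ip n m p)))"
  have contF: "continuous_on UNIV F" unfolding F_def ip_def
    by (auto intro!: continuous_intros continuous_on_compose2[OF cont])
  have perF: "torus_periodic F"
  proof -
    have e1: "exp (- \<i> * complex_of_real (ip n m (x + 2 * pi, y))) = exp (- \<i> * complex_of_real (ip n m (x, y)))" for x y
    proof -
      have "- \<i> * complex_of_real (ip n m (x + 2 * pi, y)) = - \<i> * complex_of_real (ip n m (x, y)) + 2 * complex_of_real pi * \<i> * of_int (-n)"
        by (simp add: ip_def algebra_simps)
      then show ?thesis by (simp only: exp_shift_int)
    qed
    have e2: "exp (- \<i> * complex_of_real (ip n m (x, y + 2 * pi))) = exp (- \<i> * complex_of_real (ip n m (x, y)))" for x y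
    proof -
      have "- \<i> * complex_of_real (ip n m (x, y + 2 * pi)) = - \<i> * complex_of_real (ip n m (x, y)) + 2 * complex_of_real pi * \<i> * of_int (-m)"
        by (simp add: ip_def algebra_simps)
      then show ?thesis by (simp only: exp_shift_int)
    qed
    show ?thesis using per e1 e2 unfolding torus_periodic_def F_def by simp
  qed
  have "(\<lambda>p. complex_of_real (G (p + w)) * exp (- \<i> * complex_of_real (ip n m p)))
        = (\<lambda>p. exp (\<i> * complex_of_real (ip n m w)) * F (p + w))"
  proof
    fix p
    have "exp (- \<i> * complex_of_real (ip n m p)) = exp (\<i> * complex_of_real (ip n m w)) * exp (- \<i> * complex_of_real (ip n m (p + w)))"
      by (simp add: ip_add exp_add[symmetric] algebra_simps)
    then show "complex_of_real (G (p + w)) * exp (- \<i> * complex_of_real (ip n m p)) = exp (\<i> * complex_of_real (ip n m w)) * F (p + w)"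
      by (simp add: F_def)
  qed
  then have "fourier_coeff (\<lambda>z. G (z + w)) n m
      = integral (cbox (0, 0) (2*pi, 2*pi)) (\<lambda>p. exp (\<i> * complex_of_real (ip n m w)) * F (p + w)) / complex_of_real (4 * pi^2)"
    by (simp add: fourier_coeff_ip)
  also have "\<dots> = exp (\<i> * complex_of_real (ip n m w)) * integral (cbox (0, 0) (2*pi, 2*pi)) (\<lambda>p. F (p + w)) / complex_of_real (4 * pi^2)"
    by simp
  also have "\<dots> = exp (\<i> * complex_of_real (ip n m w)) * (integral (cbox (0, 0) (2*pi, 2*pi)) F / complex_of_real (4 * pi^2))"
    using periodic_integral_shift2[OF contF perF, of w] by simp
  also have "integral (cbox (0, 0) (2*pi, 2*pi)) F / complex_of_real (4 * pi^2) = fourier_coeff G n m"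
    unfolding fourier_coeff_ip F_def by simp
  finally show ?thesis .
qed


lemma ip_diff: "ip (n - n') (m - m') w = ip n m w - ip n' m' w"
  by (simp add: ip_def algebra_simps)

lemma zgen_exp:
  assumes "\<And>s. s \<in> S \<Longrightarrow> exp (\<i> * complex_of_real (ip (fst s) (snd s) w)) = 1"
  shows "s \<in> zgen S \<Longrightarrow> exp (\<i> * complex_of_real (ip (fst s) (snd s) w)) = 1"
proof (induction rule: zgen.induct)
  case zgen_zero then show ?case by (simp add: ip_def)
next
  case (zgen_gen s) then show ?case using assms by blast
next
  case (zgen_diff a b)
  have "exp (\<i> * complex_of_real (ip (fst (a - b)) (snd (a - b)) w))
      = exp (\<i> * complex_of_real (ip (fst a) (snd a) w)) / exp (\<i> * complex_of_real (ip (fst b) (snd b) w))"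
    by (simp add: ip_diff exp_diff[symmetric] right_diff_distrib)
  then show ?case using zgen_diff.IH by simp
qed

lemma exp_i_real_eq_1:
  assumes "exp (\<i> * complex_of_real x) = 1"
  shows "\<exists>k::int. x = 2 * pi * of_int k"
proof -
  from assms[unfolded exp_eq_1] obtain n :: int where "x = of_int (2 * n) * pi" by auto
  then show ?thesis by (intro exI[of _ n]) simp
qed

lemma invariant_imp_support_exp:
  assumes cont: "continuous_on UNIV G" and per: "torus_periodic G"
    and inv: "\<And>z. G (z + w) = G z"
    and s: "s \<in> fourier_support G"
  shows "exp (\<i> * complex_of_real (ip (fst s) (snd s) w)) = 1"
proof -
  have "(\<lambda>z. G (z + w)) = G" using inv by auto
  then have "fourier_coeff G (fst s) (snd s) = exp (\<i> * complex_of_real (ip (fst s) (snd s) w)) * fourier_coeff G (fst s) (snd s)"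
    using fourier_coeff_shift[OF cont per, of w "fst s" "snd s"] by simp
  moreover have "fourier_coeff G (fst s) (snd s) \<noteq> 0" using s by (auto simp: fourier_support_def)
  ultimately show ?thesis by simp
qed

lemma invariant_imp_lattice:
  assumes cont: "continuous_on UNIV G" and per: "torus_periodic G"
    and gen: "zgen (fourier_support G) = UNIV"
    and inv: "\<And>z. G (z + w) = G z"
  shows "\<exists>m n::int. w = (2 * pi * of_int m, 2 * pi * of_int n)"
proof -
  have all: "exp (\<i> * complex_of_real (ip (fst s) (snd s) w)) = 1" for s
    using zgen_exp[of "fourier_support G" w s] invariant_imp_support_exp[OF cont per inv] gen by blast
  from all[of "(1,0)"] obtain m where "fst w = 2 * pi * of_int m"
    using exp_i_real_eq_1 by (force simp: ip_def)
  moreover from all[of "(0,1)"] obtain n where "snd w = 2 * pi * of_int n"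
    using exp_i_real_eq_1 by (force simp: ip_def)
  ultimately show ?thesis by (intro exI[of _ m] exI[of _ n]) (cases w, simp)
qed

lemma lattice_norm:
  assumes "w = (2 * pi * of_int m, 2 * pi * of_int n)" "w \<noteq> 0"
  shows "norm w \<ge> 2 * pi"
proof -
  have "m \<noteq> 0 \<or> n \<noteq> 0" using assms by (auto simp: zero_prod_def)
  then have "\<bar>fst w\<bar> \<ge> 2 * pi \<or> \<bar>snd w\<bar> \<ge> 2 * pi"
  proof
    assume "m \<noteq> 0"
    then have "\<bar>of_int m :: real\<bar> \<ge> 1" by linarith
    then have "2 * pi * 1 \<le> 2 * pi * \<bar>of_int m :: real\<bar>" by (intro mult_left_mono) auto
    then show ?thesis using assms(1) by (simp add: abs_mult)
  next
    assume "n \<noteq> 0"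
    then have "\<bar>of_int n :: real\<bar> \<ge> 1" by linarith
    then have "2 * pi * 1 \<le> 2 * pi * \<bar>of_int n :: real\<bar>" by (intro mult_left_mono) auto
    then show ?thesis using assms(1) by (simp add: abs_mult)
  qed
  moreover have "\<bar>fst w\<bar> \<le> norm w" "\<bar>snd w\<bar> \<le> norm w"
    by (metis fst_conv norm_fst_le real_norm_def surj_pair) (metis snd_conv norm_snd_le real_norm_def surj_pair)
  ultimately show ?thesis by linarith
qed

lemma invariant_small_zero:
  assumes cont: "continuous_on UNIV G" and per: "torus_periodic G"
    and gen: "zgen (fourier_support G) = UNIV"
    and inv: "\<And>z. G (z + w) = G z" and small: "norm w < 2 * pi"
  shows "w = 0"
  using invariant_imp_lattice[OF cont per gen inv] lattice_norm small by force

lemma deriv_zero_line_const: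
  fixes G :: "real \<times> real \<Rightarrow> real"
  assumes d: "\<And>p. (G has_derivative (\<lambda>h. fst h * gx p + snd h * gy p)) (at p)"
    and z: "\<And>p. fst u * gx p + snd u * gy p = 0"
  shows "G (z + u) = G z"
proof -
  have "((\<lambda>t. G (z + t *\<^sub>R u)) has_derivative (\<lambda>h. 0)) (at t within UNIV)" for t
  proof -
    have l: "((\<lambda>t. z + t *\<^sub>R u) has_derivative (\<lambda>h. h *\<^sub>R u)) (at t)"
      by (auto intro!: derivative_eq_intros)
    have "((\<lambda>t. G (z + t *\<^sub>R u)) has_derivative (\<lambda>h. fst (h *\<^sub>R u) * gx (z + t *\<^sub>R u) + snd (h *\<^sub>R u) * gy (z + t *\<^sub>R u))) (at t)"
      using has_derivative_compose[OF l d] by (simp add: o_def)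
    moreover have "(\<lambda>h. fst (h *\<^sub>R u) * gx (z + t *\<^sub>R u) + snd (h *\<^sub>R u) * gy (z + t *\<^sub>R u)) = (\<lambda>h. 0)"
    proof
      fix h :: real
      have "fst (h *\<^sub>R u) * gx (z + t *\<^sub>R u) + snd (h *\<^sub>R u) * gy (z + t *\<^sub>R u)
          = h * (fst u * gx (z + t *\<^sub>R u) + snd u * gy (z + t *\<^sub>R u))" by (simp add: algebra_simps)
      then show "fst (h *\<^sub>R u) * gx (z + t *\<^sub>R u) + snd (h *\<^sub>R u) * gy (z + t *\<^sub>R u) = 0" using z by simp
    qed
    ultimately show ?thesis by simp
  qed
  then obtain c where "\<forall>t\<in>UNIV. G (z + t *\<^sub>R u) = c"
    using has_derivative_zero_constant[of UNIV "\<lambda>t. G (z + t *\<^sub>R u)"] by auto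
  then have "G (z + 1 *\<^sub>R u) = G (z + 0 *\<^sub>R u)" by (metis UNIV_I)
  then show ?thesis by simp
qed


lemma indep3:
  fixes a b c :: real
  assumes d: "a \<noteq> b" "a \<noteq> c" "b \<noteq> c"
    and rel: "\<And>x y z::int. of_int x * a + of_int y * b + of_int z * c = 0 \<Longrightarrow> x = 0 \<and> y = 0 \<and> z = 0"
  shows "module.independent (\<lambda>r x. of_int r * x) {a, b, c}"
proof -
  interpret M: module "\<lambda>r x. real_of_int r * x"
    by unfold_locales (auto simp: algebra_simps)
  show ?thesis
    unfolding M.independent_explicit_module
  proof (intro allI impI)
    fix t u v
    assume t: "finite t" "t \<subseteq> {a, b, c}" and s: "(\<Sum>v\<in>t. real_of_int (u v) * v) = 0" and v: "v \<in> t"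
    define U where "U v = (if v \<in> t then u v else 0)" for v
    have "(\<Sum>v\<in>t. real_of_int (u v) * v) = (\<Sum>v\<in>{a,b,c}. real_of_int (U v) * v)"
      by (rule sum.mono_neutral_cong_left) (use t in \<open>auto simp: U_def\<close>)
    also have "\<dots> = real_of_int (U a) * a + real_of_int (U b) * b + real_of_int (U c) * c"
      using d by simp
    finally have "U a = 0 \<and> U b = 0 \<and> U c = 0" using s rel by metis
    moreover have "v = a \<or> v = b \<or> v = c" using t v by auto
    ultimately have "U v = 0" by auto
    then show "u v = 0" using v by (simp add: U_def)
  qed
qed

lemma irrational_ratio_indep:
  fixes \<alpha> \<beta> :: real
  assumes irr: "\<alpha> / \<beta> \<notin> \<rat>" and rel: "of_int c1 * \<alpha> + of_int c2 * \<beta> = 0"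
  shows "c1 = 0 \<and> c2 = 0"
proof -
  have b: "\<beta> \<noteq> 0" using irr by auto
  show ?thesis
  proof (cases "c1 = 0")
    case True then show ?thesis using rel b by simp
  next
    case False
    then have "\<alpha> = - of_int c2 * \<beta> / of_int c1" using rel by (simp add: field_simps)
    then have "\<alpha> / \<beta> = - of_int c2 / of_int c1" using b by simp
    then have "\<alpha> / \<beta> \<in> \<rat>" by simp
    then show ?thesis using irr by simp
  qed
qed

lemma exists_good_tau:
  fixes \<alpha> \<beta> :: real
  assumes irr: "\<alpha> / \<beta> \<notin> \<rat>"
  shows "\<exists>\<tau>>0. \<forall>c1 c2 c3::int. of_int c1 * (\<tau> * \<alpha>) + of_int c2 * (\<tau> * \<beta>) + of_int c3 * (2 * pi) = 0
            \<longrightarrow> c1 = 0 \<and> c2 = 0 \<and> c3 = 0"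
proof -
  define bad where "bad = (\<lambda>(c1::int, c2::int, c3::int). - 2 * pi * of_int c3 / (of_int c1 * \<alpha> + of_int c2 * \<beta>)) ` UNIV"
  have "countable bad" unfolding bad_def by simp
  moreover have "uncountable {0<..<1::real}" by (simp add: uncountable_open_interval)
  ultimately have "{0<..<1::real} - bad \<noteq> {}"
    by (metis Diff_eq_empty_iff countable_subset)
  then obtain \<tau> where \<tau>: "\<tau> \<in> {0<..<1}" "\<tau> \<notin> bad" by blast
  have main: "c1 = 0 \<and> c2 = 0 \<and> c3 = 0"
    if h: "of_int c1 * (\<tau> * \<alpha>) + of_int c2 * (\<tau> * \<beta>) + of_int c3 * (2 * pi) = 0" for c1 c2 c3 :: int
  proof (cases "of_int c1 * \<alpha> + of_int c2 * \<beta> = 0")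
    case True
    then have "c1 = 0 \<and> c2 = 0" using irrational_ratio_indep[OF irr] by blast
    then show ?thesis using h by simp
  next
    case False
    have "\<tau> * (of_int c1 * \<alpha> + of_int c2 * \<beta>) = - 2 * pi * of_int c3"
      using h by (simp add: algebra_simps)
    then have "\<tau> = - 2 * pi * of_int c3 / (of_int c1 * \<alpha> + of_int c2 * \<beta>)"
      using False by (simp add: field_simps)
    then have "\<tau> \<in> bad" unfolding bad_def by (auto intro!: image_eqI[of _ _ "(c1, c2, c3)"])
    then show ?thesis using \<tau> by blast
  qed
  show ?thesis using \<tau> main by auto
qed

lemma density:
  fixes \<alpha> \<beta> \<tau> :: real
  assumes good: "\<forall>c1 c2 c3::int. of_int c1 * (\<tau> * \<alpha>) + of_int c2 * (\<tau> * \<beta>) + of_int c3 * (2 * pi) = 0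
            \<longrightarrow> c1 = 0 \<and> c2 = 0 \<and> c3 = 0"
    and r: "r > 0"
  shows "\<exists>k::int. \<exists>m n::int. dist (p + (of_int k * \<tau>) *\<^sub>R (\<alpha>, \<beta>) + (2 * pi * of_int m, 2 * pi * of_int n)) z0 < r"
proof -
  define a where "a = \<tau> * \<alpha> / (2 * pi)"
  define b where "b = \<tau> * \<beta> / (2 * pi)"
  define \<theta> :: "nat \<Rightarrow> real" where "\<theta> i = (if i = 0 then a else if i = 1 then b else 1)" for i
  have rel: "x = 0 \<and> y = 0 \<and> z = 0" if "of_int x * a + of_int y * b + of_int z * 1 = 0" for x y z :: int
  proof -
    have "2 * pi * (of_int x * a + of_int y * b + of_int z * 1) = 0" using that by simp
    moreover have "\<tau> * \<alpha> = 2 * pi * a" "\<tau> * \<beta> = 2 * pi * b" by (simp_all add: a_def b_def)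
    ultimately have "of_int x * (\<tau> * \<alpha>) + of_int y * (\<tau> * \<beta>) + of_int z * (2 * pi) = 0"
      by (simp add: algebra_simps)
    then show ?thesis using good by blast
  qed
  have ab: "a \<noteq> b" using rel[of 1 "-1" 0] by auto
  have a1: "a \<noteq> 1" using rel[of 1 0 "-1"] by auto
  have b1: "b \<noteq> 1" using rel[of 0 1 "-1"] by auto
  have img: "\<theta> ` {..2} = {a, b, 1}"
  proof -
    have "{..2::nat} = {0, 1, 2}" by auto
    then show ?thesis by (auto simp: \<theta>_def)
  qed
  have indp: "module.independent (\<lambda>r x. of_int r * x) (\<theta> ` {..2})"
    unfolding img by (rule indep3[OF ab a1 b1 rel])
  have inj: "inj_on \<theta> {..2}"
  proof -
    have "{..2::nat} = {0, 1, 2}" by auto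
    then show ?thesis using ab a1 b1 by (auto simp: inj_on_def \<theta>_def)
  qed
  define tgt :: "nat \<Rightarrow> real" where "tgt i = (if i = 0 then (fst z0 - fst p) / (2 * pi) else (snd z0 - snd p) / (2 * pi))" for i
  define e where "e = r / (4 * pi)"
  have e: "e > 0" using r by (simp add: e_def)
  obtain k m where km: "\<And>i. i < 2 \<Longrightarrow> \<bar>of_int k * \<theta> i - of_int (m i) - tgt i\<bar> < e"
    using Kronecker_thm_2[OF indp inj _ e, of tgt] by (auto simp: \<theta>_def)
  have k0: "\<bar>of_int k * a - of_int (m 0) - (fst z0 - fst p) / (2 * pi)\<bar> < e"
    using km[of 0] by (simp add: \<theta>_def tgt_def)
  have k1: "\<bar>of_int k * b - of_int (m 1) - (snd z0 - snd p) / (2 * pi)\<bar> < e"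
    using km[of 1] by (simp add: \<theta>_def tgt_def)
  define q where "q = p + (of_int k * \<tau>) *\<^sub>R (\<alpha>, \<beta>) + (2 * pi * of_int (- m 0), 2 * pi * of_int (- m 1))"
  have dx: "fst q - fst z0 = 2 * pi * (of_int k * a - of_int (m 0) - (fst z0 - fst p) / (2 * pi))"
    by (simp add: q_def a_def field_simps)
  have dy: "snd q - snd z0 = 2 * pi * (of_int k * b - of_int (m 1) - (snd z0 - snd p) / (2 * pi))"
    by (simp add: q_def b_def field_simps)
  have "\<bar>fst q - fst z0\<bar> < 2 * pi * e" using k0 unfolding dx by (simp add: abs_mult)
  moreover have "\<bar>snd q - snd z0\<bar> < 2 * pi * e" using k1 unfolding dy by (simp add: abs_mult)
  moreover have "dist q z0 \<le> \<bar>fst q - fst z0\<bar> + \<bar>snd q - snd z0\<bar>"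
  proof -
    have "dist q z0 = sqrt ((fst q - fst z0)^2 + (snd q - snd z0)^2)"
      by (cases q, cases z0) (simp add: dist_Pair_Pair dist_real_def)
    also have "\<dots> \<le> \<bar>fst q - fst z0\<bar> + \<bar>snd q - snd z0\<bar>"
      by (rule real_sqrt_sum_squares_triangle_ineq[of _ 0 0, simplified]) 
    finally show ?thesis .
  qed
  ultimately have "dist q z0 < 4 * pi * e" by linarith
  then have "dist q z0 < r" using e by (simp add: e_def)
  then show ?thesis unfolding q_def by blast
qed


locale obs =
  fixes G :: "real \<times> real \<Rightarrow> real" and gx gy :: "real \<times> real \<Rightarrow> real"
  assumes d: "\<And>p. (G has_derivative (\<lambda>h. fst h * gx p + snd h * gy p)) (at p)"
    and cgx: "continuous_on UNIV gx" and cgy: "continuous_on UNIV gy"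
    and per: "torus_periodic G"
begin

definition E :: "real \<times> real \<Rightarrow> real \<times> real \<Rightarrow> real" where
  "E z u = fst u * gx z + snd u * gy z"

definition Dq :: "(real \<times> real) \<times> (real \<times> real) \<times> real \<Rightarrow> real" where
  "Dq x = integral {0..1} (\<lambda>t. E (fst x + (t * snd (snd x)) *\<^sub>R fst (snd x)) (fst (snd x)))"

lemma contG: "continuous_on UNIV G"
  by (rule continuous_at_imp_continuous_on) (use d has_derivative_continuous in blast)

lemma cont_E: "continuous_on UNIV (\<lambda>(z, u). E z u)"
  unfolding E_def case_prod_unfold
  by (auto intro!: continuous_intros continuous_on_compose2[OF cgx] continuous_on_compose2[OF cgy])

lemma cont_Dq: "continuous_on UNIV Dq"
proof -
  have c: "continuous_on (UNIV \<times> cbox 0 1) (\<lambda>(x, t). E (fst x + (t * snd (snd x)) *\<^sub>R fst (snd x)) (fst (snd x)))"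
  proof -
    have "continuous_on (UNIV \<times> cbox 0 1) (\<lambda>y. (\<lambda>(z, u). E z u) ((\<lambda>(x, t::real). (fst x + (t * snd (snd x)) *\<^sub>R fst (snd x), fst (snd x))) y))"
      by (rule continuous_on_compose2[OF cont_E]) (auto simp: case_prod_unfold intro!: continuous_intros)
    then show ?thesis by (simp add: case_prod_unfold)
  qed
  have "continuous_on UNIV (\<lambda>x. integral (cbox 0 1) (\<lambda>t. E (fst x + (t * snd (snd x)) *\<^sub>R fst (snd x)) (fst (snd x))))"
    by (rule integral_continuous_on_param[OF c])
  then show ?thesis unfolding Dq_def by simp
qed

lemma Dq_zero: "Dq (z, u, 0) = E z u"
  by (simp add: Dq_def)

lemma Dq_diff: "s * Dq (z, u, s) = G (z + s *\<^sub>R u) - G z"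
proof -
  have "G (z + s *\<^sub>R u) - G z = integral {0..1} (\<lambda>t. fst (s *\<^sub>R u) * gx (z + t *\<^sub>R (s *\<^sub>R u)) + snd (s *\<^sub>R u) * gy (z + t *\<^sub>R (s *\<^sub>R u)))"
    by (rule mvt_integral[of UNIV G, OF has_derivative_subset[OF d]]) auto
  also have "\<dots> = integral {0..1} (\<lambda>t. s * E (z + (t * s) *\<^sub>R u) u)"
    by (rule integral_cong) (simp add: E_def algebra_simps)
  also have "\<dots> = s * Dq (z, u, s)"
    by (simp add: Dq_def)
  finally show ?thesis by simp
qed

lemma deriv_per:
  assumes "\<And>z. G (z + c) = G z"
  shows "gx (p + c) = gx p \<and> gy (p + c) = gy p"
proof -
  have "((\<lambda>z. G (z + c)) has_derivative (\<lambda>h. fst h * gx (p + c) + snd h * gy (p + c))) (at p)"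
  proof -
    have l: "((\<lambda>z. z + c) has_derivative (\<lambda>h. h)) (at p)"
      by (auto intro!: derivative_eq_intros)
    show ?thesis using has_derivative_compose[OF l, of G] d[of "p + c"] by simp
  qed
  moreover have "(\<lambda>z. G (z + c)) = G" using assms by auto
  ultimately have "(\<lambda>h. fst h * gx (p + c) + snd h * gy (p + c)) = (\<lambda>h. fst h * gx p + snd h * gy p)"
    using has_derivative_unique d by metis
  then have "fst (1::real, 0::real) * gx (p + c) + snd (1::real, 0::real) * gy (p + c) = fst (1::real, 0::real) * gx p + snd (1::real, 0::real) * gy p"
    "fst (0::real, 1::real) * gx (p + c) + snd (0::real, 1::real) * gy (p + c) = fst (0::real, 1::real) * gx p + snd (0::real, 1::real) * gy p"
    by metis+
  then show ?thesis by simp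
qed

lemma Dq_per: "Dq (z + (2 * pi * of_int m, 2 * pi * of_int n), u, s) = Dq (z, u, s)"
proof -
  let ?c = "(2 * pi * of_int m, 2 * pi * of_int n)"
  have g: "gx (p + ?c) = gx p \<and> gy (p + ?c) = gy p" for p
    by (rule deriv_per) (rule per_int_shift[OF per])
  have "E (z + ?c + w) u' = E (z + w) u'" for w u'
    using g[of "z + w"] by (simp add: E_def algebra_simps)
  then show ?thesis unfolding Dq_def by simp
qed

end


lemma compact_cover_int:
  fixes f :: "int \<Rightarrow> 'a::topological_space \<Rightarrow> real"
  assumes K: "compact K" and c: "\<And>k. continuous_on UNIV (f k)"
    and cov: "\<And>x. x \<in> K \<Longrightarrow> \<exists>k. f k x \<noteq> 0"
  shows "\<exists>M::nat. \<forall>x\<in>K. \<exists>k. \<bar>k\<bar> \<le> int M \<and> f k x \<noteq> 0"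
proof -
  define U where "U k = {x. f k x \<noteq> 0}" for k
  have oU: "open (U k)" for k
  proof -
    have "U k = f k -` (- {0})" by (auto simp: U_def)
    then show ?thesis using open_vimage[of "- {0}" "f k"] c by (simp add: open_Compl)
  qed
  have "K \<subseteq> \<Union> (range U)" using cov by (auto simp: U_def)
  then obtain T where T: "T \<subseteq> range U" "finite T" "K \<subseteq> \<Union> T"
    using compactE[OF K] oU by (metis imageE)
  then obtain F where F: "finite F" "T = U ` F"
    using finite_subset_image[of T U UNIV] by auto
  define M where "M = (\<Sum>k\<in>F. nat \<bar>k\<bar>)"
  have "\<bar>k\<bar> \<le> int M" if "k \<in> F" for k
  proof -
    have "nat \<bar>k\<bar> \<le> M" unfolding M_def by (rule member_le_sum) (use that F in auto)
    then show ?thesis by linarith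
  qed
  moreover have "\<exists>k\<in>F. f k x \<noteq> 0" if "x \<in> K" for x
    using T F that by (auto simp: U_def)
  ultimately show ?thesis by blast
qed

lemma floor_bounds2pi:
  fixes y :: real
  shows "2 * pi * of_int \<lfloor>y / (2 * pi)\<rfloor> \<le> y \<and> y < 2 * pi * (of_int \<lfloor>y / (2 * pi)\<rfloor> + 1)"
proof -
  have h1: "of_int \<lfloor>y / (2 * pi)\<rfloor> \<le> y / (2 * pi)" "y / (2 * pi) < of_int \<lfloor>y / (2 * pi)\<rfloor> + 1" by linarith+
  have "2 * pi * of_int \<lfloor>y / (2 * pi)\<rfloor> \<le> 2 * pi * (y / (2 * pi))"
    by (rule mult_left_mono[OF h1(1)]) simp
  moreover have "2 * pi * (y / (2 * pi)) < 2 * pi * (of_int \<lfloor>y / (2 * pi)\<rfloor> + 1)"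
    by (rule mult_strict_left_mono[OF h1(2)]) simp
  ultimately show ?thesis by simp
qed

lemma reduce_box:
  "\<exists>m n::int. (fst p - 2 * pi * of_int m, snd p - 2 * pi * of_int n) \<in> cbox (0, 0) (2 * pi, 2 * pi)"
proof -
  have r: "0 \<le> x - 2 * pi * of_int \<lfloor>x / (2 * pi)\<rfloor> \<and> x - 2 * pi * of_int \<lfloor>x / (2 * pi)\<rfloor> \<le> 2 * pi" for x :: real
    using floor_bounds2pi[of x] by (simp add: algebra_simps)
  show ?thesis
    using r[of "fst p"] r[of "snd p"] by (intro exI) (auto simp: cbox_Pair_iff)
qed

lemma reduce_centered:
  "\<exists>m n::int. \<bar>fst p - 2 * pi * of_int m\<bar> \<le> pi \<and> \<bar>snd p - 2 * pi * of_int n\<bar> \<le> pi"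
proof -
  have r: "\<bar>x - 2 * pi * of_int \<lfloor>(x + pi) / (2 * pi)\<rfloor>\<bar> \<le> pi" for x :: real
    using floor_bounds2pi[of "x + pi"] by (simp add: algebra_simps abs_le_iff)
  show ?thesis using r[of "fst p"] r[of "snd p"] by blast
qed

lemma norm_centered:
  fixes w :: "real \<times> real"
  assumes "\<bar>fst w\<bar> \<le> pi" "\<bar>snd w\<bar> \<le> pi"
  shows "norm w \<le> 7 * pi / 4"
proof -
  have "(fst w)^2 \<le> pi^2" "(snd w)^2 \<le> pi^2"
    using assms abs_le_square_iff[of "fst w" pi] abs_le_square_iff[of "snd w" pi] by simp_all
  moreover have "(7 * pi / 4)^2 = 49/16 * pi^2" by (simp add: power2_eq_square field_simps)
  moreover have "0 \<le> pi^2" by simp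
  ultimately have "(fst w)^2 + (snd w)^2 \<le> (7 * pi / 4)^2" by linarith
  then have "sqrt ((fst w)^2 + (snd w)^2) \<le> 7 * pi / 4"
    using real_sqrt_le_mono[of _ "(7 * pi / 4)^2"] by (simp add: pi_gt_zero less_imp_le)
  moreover have "norm w = sqrt ((fst w)^2 + (snd w)^2)"
    by (cases w) (simp add: norm_Pair)
  ultimately show ?thesis by simp
qed

lemma lin_flow_eq: "lin_flow a b t p = p + t *\<^sub>R (a, b)"
  by (cases p) (simp add: lin_flow_def algebra_simps)

context obs
begin

lemma Dq_per': "Dq (z + (2 * pi * of_int m, 2 * pi * of_int n) + y, u, s) = Dq (z + y, u, s)"
  using Dq_per[of "z + y" m n u s] by (simp add: algebra_simps)

lemma Dq_nonvanish:
  assumes gen: "zgen (fourier_support G) = UNIV"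
    and u: "norm u = 1" and s: "0 \<le> s" "s \<le> 7 * pi / 4"
  shows "\<exists>z. Dq (z, u, s) \<noteq> 0"
proof (rule ccontr)
  assume "\<not> (\<exists>z. Dq (z, u, s) \<noteq> 0)"
  then have z: "\<And>z. Dq (z, u, s) = 0" by blast
  show False
  proof (cases "s = 0")
    case True
    have "G (z + u) = G z" for z
      by (rule deriv_zero_line_const[OF d]) (use z[unfolded True Dq_zero] in \<open>simp add: E_def\<close>)
    then have "u = 0" using invariant_small_zero[OF contG per gen] u pi_gt3 by simp
    then show False using u by simp
  next
    case False
    have "G (z + s *\<^sub>R u) = G z" for z using Dq_diff[of s z u] z by simp
    moreover have "norm (s *\<^sub>R u) < 2 * pi" using u s pi_gt3 by simp
    ultimately have "s *\<^sub>R u = 0" using invariant_small_zero[OF contG per gen] by blast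
    then show False using u False by simp
  qed
qed

lemma cover_all:
  fixes \<alpha> \<beta> \<tau> :: real
  assumes gen: "zgen (fourier_support G) = UNIV"
    and good: "\<forall>c1 c2 c3::int. of_int c1 * (\<tau> * \<alpha>) + of_int c2 * (\<tau> * \<beta>) + of_int c3 * (2 * pi) = 0
            \<longrightarrow> c1 = 0 \<and> c2 = 0 \<and> c3 = 0"
  shows "\<exists>M::nat. \<forall>p u s. norm u = 1 \<longrightarrow> 0 \<le> s \<longrightarrow> s \<le> 7 * pi / 4 \<longrightarrow>
           (\<exists>k\<le>2 * M. Dq (p + (real k * \<tau>) *\<^sub>R (\<alpha>, \<beta>), u, s) \<noteq> 0)"
proof -
  define K where "K = cbox (0::real, 0::real) (2 * pi, 2 * pi) \<times> (sphere (0::real \<times> real) 1 \<times> {0..7 * pi / 4})"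
  define f where "f k x = Dq (fst x + (of_int k * \<tau>) *\<^sub>R (\<alpha>, \<beta>), snd x)" for k :: int and x :: "(real \<times> real) \<times> (real \<times> real) \<times> real"
  have K: "compact K" unfolding K_def
    by (intro compact_Times compact_cbox compact_sphere compact_Icc)
  have c: "continuous_on UNIV (f k)" for k
    unfolding f_def by (rule continuous_on_compose2[OF cont_Dq]) (auto intro!: continuous_intros)
  have cov: "\<exists>k. f k x \<noteq> 0" if x: "x \<in> K" for x
  proof -
    obtain p u s where xe: "x = (p, u, s)" by (cases x) auto
    have u: "norm u = 1" and s: "0 \<le> s" "s \<le> 7 * pi / 4" using x by (auto simp: K_def xe)
    obtain z0 where z0: "Dq (z0, u, s) \<noteq> 0" using Dq_nonvanish[OF gen u s] by blast
    have "isCont (\<lambda>z. Dq (z, u, s)) z0"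
      by (rule continuous_on_interior[of UNIV]) (auto intro!: continuous_on_compose2[OF cont_Dq] continuous_intros)
    then obtain r where r: "r > 0" "\<And>y. dist z0 y < r \<Longrightarrow> Dq (y, u, s) \<noteq> 0"
      using continuous_at_avoid[of z0 "\<lambda>z. Dq (z, u, s)" 0] z0 by blast
    obtain k m n :: int where "dist (p + (of_int k * \<tau>) *\<^sub>R (\<alpha>, \<beta>) + (2 * pi * of_int m, 2 * pi * of_int n)) z0 < r"
      using density[OF good r(1)] by blast
    then have "Dq (p + (of_int k * \<tau>) *\<^sub>R (\<alpha>, \<beta>) + (2 * pi * of_int m, 2 * pi * of_int n), u, s) \<noteq> 0"
      using r(2) by (simp add: dist_commute)
    then have "Dq (p + (of_int k * \<tau>) *\<^sub>R (\<alpha>, \<beta>), u, s) \<noteq> 0"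
      using Dq_per[of "p + (of_int k * \<tau>) *\<^sub>R (\<alpha>, \<beta>)" m n u s] by simp
    then show ?thesis by (auto simp: f_def xe)
  qed
  obtain M where M: "\<forall>x\<in>K. \<exists>k. \<bar>k\<bar> \<le> int M \<and> f k x \<noteq> 0"
    using compact_cover_int[OF K c cov] by blast
  have "\<exists>k\<le>2 * M. Dq (p + (real k * \<tau>) *\<^sub>R (\<alpha>, \<beta>), u, s) \<noteq> 0"
    if u: "norm u = 1" and s: "0 \<le> s" "s \<le> 7 * pi / 4" for p u s
  proof -
    define p0 where "p0 = p + (real M * \<tau>) *\<^sub>R (\<alpha>, \<beta>)"
    obtain m n :: int where mn: "(fst p0 - 2 * pi * of_int m, snd p0 - 2 * pi * of_int n) \<in> cbox (0, 0) (2 * pi, 2 * pi)"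
      using reduce_box by blast
    define p1 where "p1 = (fst p0 - 2 * pi * of_int m, snd p0 - 2 * pi * of_int n)"
    have "(p1, u, s) \<in> K" using mn u s by (simp add: K_def p1_def)
    then obtain k where k: "\<bar>k\<bar> \<le> int M" "f k (p1, u, s) \<noteq> 0" using M by blast
    have p0: "p0 = p1 + (2 * pi * of_int m, 2 * pi * of_int n)" by (simp add: p1_def)
    have "Dq (p0 + (of_int k * \<tau>) *\<^sub>R (\<alpha>, \<beta>), u, s) \<noteq> 0"
      using k(2) Dq_per'[of p1 m n "(of_int k * \<tau>) *\<^sub>R (\<alpha>, \<beta>)" u s] by (simp add: f_def p0)
    moreover have "p0 + (of_int k * \<tau>) *\<^sub>R (\<alpha>, \<beta>) = p + (real (nat (int M + k)) * \<tau>) *\<^sub>R (\<alpha>, \<beta>)"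
      using k(1) by (simp add: p0_def algebra_simps scaleR_left_distrib[symmetric])
    ultimately show ?thesis using k(1) by (intro exI[of _ "nat (int M + k)"]) auto
  qed
  then show ?thesis by blast
qed

end


lemma good_if_gen:
  fixes \<alpha> \<beta> :: real and G :: "real \<times> real \<Rightarrow> real"
  assumes irr: "\<alpha> / \<beta> \<notin> \<rat>" and per: "torus_periodic G" and sm: "smooth2 G"
    and gen: "zgen (fourier_support G) = UNIV"
  shows "good_observation G \<alpha> \<beta>"
proof -
  obtain gx gy where d: "\<And>p. (G has_derivative (\<lambda>h. fst h * gx p + snd h * gy p)) (at p)"
    and sx: "smooth2 gx" and sy: "smooth2 gy"
    using smooth2_has_derivative[OF sm] by blast
  interpret obs G gx gy
    by unfold_locales (use d smooth2_continuous[OF sx] smooth2_continuous[OF sy] per in auto)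
  obtain \<tau> where \<tau>: "\<tau> > 0" and good: "\<forall>c1 c2 c3::int. of_int c1 * (\<tau> * \<alpha>) + of_int c2 * (\<tau> * \<beta>) + of_int c3 * (2 * pi) = 0
            \<longrightarrow> c1 = 0 \<and> c2 = 0 \<and> c3 = 0"
    using exists_good_tau[OF irr] by blast
  obtain M :: nat where M: "\<And>p u s. norm u = 1 \<Longrightarrow> 0 \<le> s \<Longrightarrow> s \<le> 7 * pi / 4 \<Longrightarrow>
           (\<exists>k\<le>2 * M. Dq (p + (real k * \<tau>) *\<^sub>R (\<alpha>, \<beta>), u, s) \<noteq> 0)"
    using cover_all[OF gen good] by blast
  define N where "N = 2 * M + 1"
  have inj: "torus_eq p q"
    if agree: "\<forall>k\<le>N. G (p + (real k * \<tau>) *\<^sub>R (\<alpha>, \<beta>)) = G (q + (real k * \<tau>) *\<^sub>R (\<alpha>, \<beta>))" for p q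
  proof -
    obtain m n :: int where mn: "\<bar>fst (q - p) - 2 * pi * of_int m\<bar> \<le> pi" "\<bar>snd (q - p) - 2 * pi * of_int n\<bar> \<le> pi"
      using reduce_centered by blast
    define w where "w = (fst (q - p) - 2 * pi * of_int m, snd (q - p) - 2 * pi * of_int n)"
    have qw: "q = p + w + (2 * pi * of_int m, 2 * pi * of_int n)"
      by (simp add: w_def prod_eq_iff)
    show ?thesis
    proof (cases "w = 0")
      case True
      then have "q = p + (2 * pi * of_int m, 2 * pi * of_int n)" using qw by simp
      then show ?thesis unfolding torus_eq_def
        by (intro exI[of _ "-m"] exI[of _ "-n"]) simp
    next
      case False
      define s where "s = norm w"
      define u where "u = (1 / s) *\<^sub>R w"
      have s0: "s > 0" using False by (simp add: s_def)
      have u1: "norm u = 1" using s0 by (simp add: u_def s_def)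
      have s1: "s \<le> 7 * pi / 4" unfolding s_def by (rule norm_centered) (use mn in \<open>simp_all add: w_def\<close>)
      have wsu: "s *\<^sub>R u = w" using s0 by (simp add: u_def)
      obtain k where k: "k \<le> 2 * M" "Dq (p + (real k * \<tau>) *\<^sub>R (\<alpha>, \<beta>), u, s) \<noteq> 0"
        using M[OF u1 less_imp_le[OF s0] s1, of p] by blast
      let ?z = "p + (real k * \<tau>) *\<^sub>R (\<alpha>, \<beta>)"
      have n0: "s * Dq (?z, u, s) \<noteq> 0" using k(2) s0 by simp
      have e: "s * Dq (?z, u, s) = G (?z + w) - G ?z"
        using Dq_diff[of s ?z u] wsu by simp
      have "G (?z + w) - G ?z \<noteq> 0" by (rule contrapos_nn[OF n0]) (subst e, assumption)
      moreover have "G (q + (real k * \<tau>) *\<^sub>R (\<alpha>, \<beta>)) = G (?z + w)"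
      proof -
        have eq: "q + (real k * \<tau>) *\<^sub>R (\<alpha>, \<beta>) = (?z + w) + (2 * pi * of_int m, 2 * pi * of_int n)"
          using qw by (simp add: algebra_simps)
        show ?thesis unfolding eq by (rule per_int_shift[OF per])
      qed
      moreover have "k \<le> N" using k(1) by (simp add: N_def)
      ultimately show ?thesis using agree by auto
    qed
  qed
  have imm: "\<exists>k\<le>N. frechet_derivative G (at (p + (real k * \<tau>) *\<^sub>R (\<alpha>, \<beta>))) h \<noteq> 0"
    if h: "h \<noteq> 0" for p h
  proof -
    define u where "u = (1 / norm h) *\<^sub>R h"
    have u1: "norm u = 1" using h by (simp add: u_def)
    have "\<exists>k\<le>2 * M. Dq (p + (real k * \<tau>) *\<^sub>R (\<alpha>, \<beta>), u, 0) \<noteq> 0"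
      by (rule M[OF u1]) (simp_all add: less_imp_le)
    then obtain k where k: "k \<le> 2 * M" "Dq (p + (real k * \<tau>) *\<^sub>R (\<alpha>, \<beta>), u, 0) \<noteq> 0"
      by blast
    let ?z = "p + (real k * \<tau>) *\<^sub>R (\<alpha>, \<beta>)"
    have fd: "(\<lambda>h. fst h * gx ?z + snd h * gy ?z) = frechet_derivative G (at ?z)"
      by (rule frechet_derivative_at[OF d[of ?z]])
    have "E ?z u \<noteq> 0" using k(2) unfolding Dq_zero .
    moreover have "E ?z u = (1 / norm h) * E ?z h"
      unfolding u_def E_def by (simp add: algebra_simps)
    ultimately have "E ?z h \<noteq> 0" by simp
    then have "frechet_derivative G (at ?z) h \<noteq> 0"
      unfolding fd[symmetric] E_def by simp
    moreover have "k \<le> N" using k(1) by (simp add: N_def)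
    ultimately show ?thesis by blast
  qed
  have "takens_embedding G \<alpha> \<beta> N \<tau>"
    unfolding takens_embedding_def lin_flow_eq
  proof (intro conjI allI impI)
    fix p q
    assume "\<forall>k\<le>N. G (p + (real k * \<tau>) *\<^sub>R (\<alpha>, \<beta>)) = G (q + (real k * \<tau>) *\<^sub>R (\<alpha>, \<beta>))"
    then show "torus_eq p q" by (rule inj)
  next
    fix p :: "real \<times> real" and h :: "real \<times> real"
    assume "h \<noteq> 0"
    then show "\<exists>k\<le>N. frechet_derivative G (at (p + (real k * \<tau>) *\<^sub>R (\<alpha>, \<beta>))) h \<noteq> 0" by (rule imm)
  qed
  moreover have "N > 0" by (simp add: N_def)
  ultimately show ?thesis unfolding good_observation_def using \<tau> by blast
qed


lemma zgen_neg: "a \<in> zgen S \<Longrightarrow> - a \<in> zgen S"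
  using zgen_diff[OF zgen_zero, of a S] by simp

lemma zgen_add: "a \<in> zgen S \<Longrightarrow> b \<in> zgen S \<Longrightarrow> a + b \<in> zgen S"
  using zgen_diff[of a S "- b"] zgen_neg[of b S] by simp

lemma zgen_mult:
  assumes a: "a \<in> zgen S"
  shows "(k * fst a, k * snd a) \<in> zgen S"
proof (induction k rule: int_induct[where k=0])
  case base then show ?case using zgen_zero[of S] by (simp add: zero_prod_def)
next
  case (step1 i)
  have "((i + 1) * fst a, (i + 1) * snd a) = (i * fst a, i * snd a) + a"
    by (cases a) (simp add: algebra_simps)
  then show ?case using zgen_add[OF step1(2) a] by simp
next
  case (step2 i)
  have "((i - 1) * fst a, (i - 1) * snd a) = (i * fst a, i * snd a) - a"
    by (cases a) (simp add: algebra_simps)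
  then show ?case using zgen_diff[OF step2(2) a] by simp
qed

lemma int_subgroup_mult:
  fixes A :: "int set"
  assumes z: "0 \<in> A" and d: "\<And>x y. x \<in> A \<Longrightarrow> y \<in> A \<Longrightarrow> x - y \<in> A" and c: "c \<in> A"
  shows "k * c \<in> A"
proof (induction k rule: int_induct[where k=0])
  case base then show ?case using z by simp
next
  case (step1 i)
  have "- c \<in> A" using d[OF z c] by simp
  then have "i * c - (- c) \<in> A" using d step1(2) by blast
  then show ?case by (simp add: algebra_simps)
next
  case (step2 i)
  have "i * c - c \<in> A" using d step2(2) c by blast
  then show ?case by (simp add: algebra_simps)
qed

lemma int_subgroup:
  fixes A :: "int set"
  assumes z: "0 \<in> A" and d: "\<And>x y. x \<in> A \<Longrightarrow> y \<in> A \<Longrightarrow> x - y \<in> A"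
  shows "\<exists>g\<ge>0. \<forall>x. x \<in> A \<longleftrightarrow> g dvd x"
proof (cases "A = {0}")
  case True then show ?thesis by (intro exI[of _ 0]) auto
next
  case False
  then obtain x where x: "x \<in> A" "x \<noteq> 0" using z by blast
  have "\<bar>x\<bar> \<in> A" using x d[OF z x(1)] by (cases "x \<ge> 0") auto
  then have ex: "\<exists>y. y \<in> A \<and> y > 0" using x by (intro exI[of _ "\<bar>x\<bar>"]) auto
  obtain y where y: "y \<in> A" "y > 0" using ex by blast
  define n where "n = (LEAST n. int n \<in> A \<and> n > 0)"
  have n: "int n \<in> A \<and> n > 0" unfolding n_def by (rule LeastI[of _ "nat y"]) (use y in simp)
  have nmin: "\<And>m. int m \<in> A \<and> m > 0 \<Longrightarrow> n \<le> m" unfolding n_def by (rule Least_le)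
  define g where "g = int n"
  have g: "g \<in> A" "g > 0" using n by (auto simp: g_def)
  have gmin: "g \<le> z" if "z \<in> A" "z > 0" for z
    using nmin[of "nat z"] that by (simp add: g_def le_nat_iff)
  have "x \<in> A \<longleftrightarrow> g dvd x" for x
  proof
    assume xA: "x \<in> A"
    have "(x div g) * g \<in> A" by (rule int_subgroup_mult[OF z d g(1)])
    then have "x - (x div g) * g \<in> A" using d xA by blast
    moreover have "x - (x div g) * g = x mod g" by (simp add: minus_div_mult_eq_mod)
    ultimately have m: "x mod g \<in> A" by simp
    have "x mod g = 0"
    proof (rule ccontr)
      assume "x mod g \<noteq> 0"
      then have "x mod g > 0" using g(2) by (simp add: order_less_le)
      then have "g \<le> x mod g" using gmin m by blast
      moreover have "x mod g < g" using g(2) by simp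
      ultimately show False by simp
    qed
    then show "g dvd x" by (simp add: dvd_eq_mod_eq_0)
  next
    assume "g dvd x"
    then obtain k where "x = g * k" by (auto simp: dvd_def)
    then show "x \<in> A" using int_subgroup_mult[OF z d g(1), of k] by (simp add: mult.commute)
  qed
  then show ?thesis using g by (intro exI[of _ g]) auto
qed

lemma proper_subgroup_dual:
  assumes H: "zgen S \<noteq> UNIV"
  shows "\<exists>\<theta>1 \<theta>2::real. \<not> (\<theta>1 \<in> \<int> \<and> \<theta>2 \<in> \<int>) \<and> (\<forall>s\<in>zgen S. of_int (fst s) * \<theta>1 + of_int (snd s) * \<theta>2 \<in> \<int>)"
proof -
  define A where "A = {x. \<exists>y. (x, y) \<in> zgen S}"
  define C where "C = {y. (0, y) \<in> zgen S}"
  have "0 \<in> A" unfolding A_def using zgen_zero[of S] by (auto simp: zero_prod_def)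
  moreover have "x - y \<in> A" if hx: "x \<in> A" and hy: "y \<in> A" for x y
  proof -
    obtain a where "(x, a) \<in> zgen S" using hx unfolding A_def by blast
    moreover obtain b where "(y, b) \<in> zgen S" using hy unfolding A_def by blast
    ultimately show ?thesis using zgen_diff[of "(x, a)" S "(y, b)"] unfolding A_def by auto
  qed
  ultimately obtain a where a: "a \<ge> 0" "\<And>x. x \<in> A \<longleftrightarrow> a dvd x" using int_subgroup[of A] by blast
  have "0 \<in> C" unfolding C_def using zgen_zero[of S] by (auto simp: zero_prod_def)
  moreover have "x - y \<in> C" if "x \<in> C" "y \<in> C" for x y
    using zgen_diff[of "(0, x)" S "(0, y)"] that by (auto simp: C_def)
  ultimately obtain c where c: "c \<ge> 0" "\<And>x. x \<in> C \<longleftrightarrow> c dvd x" using int_subgroup[of C] by blast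
  show ?thesis
  proof (cases "a = 1")
    case False
    define a' where "a' = (if a = 0 then 2 else a)"
    have a'2: "a' \<ge> 2" using False a(1) by (auto simp: a'_def)
    have "\<not> (1 / of_int a' :: real) \<in> \<int>"
    proof
      assume "(1 / of_int a' :: real) \<in> \<int>"
      then obtain k where k: "(1 / of_int a' :: real) = of_int k" by (auto elim: Ints_cases)
      have "0 < (1 / of_int a' :: real)" "(1 / of_int a' :: real) < 1" using a'2 by auto
      then show False unfolding k by simp
    qed
    moreover have "of_int (fst s) * (1 / of_int a') + of_int (snd s) * 0 \<in> (\<int> :: real set)" if s: "s \<in> zgen S" for s
    proof -
      have "fst s \<in> A" unfolding A_def using s by (intro CollectI exI[of _ "snd s"]) simp
      then have "a dvd fst s" using a by blast
      then obtain k where k: "fst s = a * k" by (auto simp: dvd_def)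
      show ?thesis
      proof (cases "a = 0")
        case True then show ?thesis using k by simp
      next
        case False
        then have "of_int (fst s) * (1 / of_int a') = (of_int k :: real)"
          using k by (simp add: a'_def)
        then show ?thesis by simp
      qed
    qed
    ultimately show ?thesis by blast
  next
    case True
    then have "1 \<in> A" using a by simp
    then obtain b0 where b0: "(1, b0) \<in> zgen S" by (auto simp: A_def)
    have c1: "c \<noteq> 1"
    proof
      assume "c = 1"
      then have "(0, 1) \<in> zgen S" using c by (simp add: C_def)
      have "(x, y) \<in> zgen S" for x y
      proof -
        have "(x * fst (1::int, b0), x * snd (1::int, b0)) \<in> zgen S" using zgen_mult[OF b0, of x] .
        moreover have "((y - x * b0) * fst (0::int, 1::int), (y - x * b0) * snd (0::int, 1::int)) \<in> zgen S"
          using zgen_mult[OF \<open>(0, 1) \<in> zgen S\<close>, of "y - x * b0"] .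
        ultimately have "(x * 1, x * b0) + ((y - x * b0) * 0, (y - x * b0) * 1) \<in> zgen S"
          using zgen_add by force
        then show ?thesis by simp
      qed
      then show False using H by auto
    qed
    define c' where "c' = (if c = 0 then 2 else c)"
    have c'2: "c' \<ge> 2" using c1 c(1) by (auto simp: c'_def)
    have "\<not> (1 / of_int c' :: real) \<in> \<int>"
    proof
      assume "(1 / of_int c' :: real) \<in> \<int>"
      then obtain k where k: "(1 / of_int c' :: real) = of_int k" by (auto elim: Ints_cases)
      have "0 < (1 / of_int c' :: real)" "(1 / of_int c' :: real) < 1" using c'2 by auto
      then show False unfolding k by simp
    qed
    moreover have "of_int (fst s) * (- of_int b0 / of_int c') + of_int (snd s) * (1 / of_int c') \<in> (\<int> :: real set)"
      if s: "s \<in> zgen S" for s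
    proof -
      have "(fst s * fst (1::int, b0), fst s * snd (1::int, b0)) \<in> zgen S" using zgen_mult[OF b0, of "fst s"] .
      then have "s - (fst s, fst s * b0) \<in> zgen S" using zgen_diff[OF s] by simp
      then have "snd s - fst s * b0 \<in> C" by (cases s) (simp add: C_def)
      then have "c dvd (snd s - fst s * b0)" using c by blast
      then obtain k where k: "snd s - fst s * b0 = c * k" by (auto simp: dvd_def)
      have eq: "of_int (fst s) * (- of_int b0 / of_int c') + of_int (snd s) * (1 / of_int c')
              = (of_int (snd s - fst s * b0) / of_int c' :: real)"
        using c'2 by (simp add: field_simps)
      show ?thesis
      proof (cases "c = 0")
        case True then show ?thesis using k eq by simp
      next
        case False
        then have "(of_int (snd s - fst s * b0) / of_int c' :: real) = of_int k"
          using k by (simp add: c'_def)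
        then show ?thesis using eq by simp
      qed
    qed
    ultimately show ?thesis by blast
  qed
qed


definition ex :: "int \<Rightarrow> int \<Rightarrow> real \<times> real \<Rightarrow> complex" where
  "ex n m z = exp (\<i> * complex_of_real (ip n m z))"

inductive_set TP :: "(real \<times> real \<Rightarrow> complex) set" where
  tp_exp: "ex n m \<in> TP"
| tp_add: "f \<in> TP \<Longrightarrow> g \<in> TP \<Longrightarrow> (\<lambda>z. f z + g z) \<in> TP"
| tp_scale: "f \<in> TP \<Longrightarrow> (\<lambda>z. c * f z) \<in> TP"

lemma tp_eq: "f \<in> TP \<Longrightarrow> (\<And>z. f z = g z) \<Longrightarrow> g \<in> TP"
proof -
  assume "f \<in> TP" "\<And>z. f z = g z"
  then have "f = g" by auto
  then show "g \<in> TP" using \<open>f \<in> TP\<close> by simp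
qed

lemma ip_neg: "ip (-n) (-m) p = - ip n m p"
  by (simp add: ip_def)

lemma ex_mult: "ex n m z * ex n' m' z = ex (n + n') (m + m') z"
  by (simp add: ex_def ip_def exp_add[symmetric] algebra_simps)

lemma tp_mult_exp: "g \<in> TP \<Longrightarrow> (\<lambda>z. ex n m z * g z) \<in> TP"
proof (induction rule: TP.induct)
  case (tp_exp n' m')
  show ?case using TP.tp_exp[of "n + n'" "m + m'"] by (rule tp_eq) (simp add: ex_mult)
next
  case (tp_add f g)
  show ?case using TP.tp_add[OF tp_add.IH] by (rule tp_eq) (simp add: algebra_simps)
next
  case (tp_scale f c)
  show ?case using TP.tp_scale[OF tp_scale.IH, of c] by (rule tp_eq) (simp add: algebra_simps)
qed

lemma tp_mult: "f \<in> TP \<Longrightarrow> g \<in> TP \<Longrightarrow> (\<lambda>z. f z * g z) \<in> TP"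
proof (induction f rule: TP.induct)
  case (tp_exp n m)
  then show ?case by (rule tp_mult_exp)
next
  case (tp_add f1 f2)
  show ?case using TP.tp_add[OF tp_add.IH(1)[OF tp_add.prems] tp_add.IH(2)[OF tp_add.prems]]
    by (rule tp_eq) (simp add: algebra_simps)
next
  case (tp_scale f c)
  show ?case using TP.tp_scale[OF tp_scale.IH[OF tp_scale.prems], of c]
    by (rule tp_eq) (simp add: algebra_simps)
qed

lemma tp_const: "(\<lambda>z. c) \<in> TP"
  using TP.tp_scale[OF TP.tp_exp[of 0 0], of c] by (rule tp_eq) (simp add: ex_def ip_def)

lemma tp_cont: "f \<in> TP \<Longrightarrow> continuous_on UNIV f"
proof (induction rule: TP.induct)
  case (tp_exp n m) then show ?case unfolding ex_def ip_def by (auto intro!: continuous_intros)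
next
  case (tp_add f g) then show ?case by (auto intro!: continuous_intros)
next
  case (tp_scale f c) then show ?case by (auto intro!: continuous_intros)
qed

lemma tp_orth:
  fixes F :: "real \<times> real \<Rightarrow> real"
  assumes cont: "continuous_on UNIV F" and zero: "\<And>n m. fourier_coeff F n m = 0"
  shows "f \<in> TP \<Longrightarrow> integral (cbox (0,0) (2*pi,2*pi)) (\<lambda>z. complex_of_real (F z) * f z) = 0"
proof (induction rule: TP.induct)
  case (tp_exp n m)
  have "fourier_coeff F (-n) (-m) = 0" by (rule zero)
  then have "integral (cbox (0, 0) (2*pi, 2*pi))
       (\<lambda>p. complex_of_real (F p) * exp (- \<i> * complex_of_real (ip (-n) (-m) p))) = 0"
    by (simp add: fourier_coeff_ip)
  moreover have "(\<lambda>p. complex_of_real (F p) * exp (- \<i> * complex_of_real (ip (-n) (-m) p))) = (\<lambda>z. complex_of_real (F z) * ex n m z)"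
    by (auto simp: ex_def ip_neg)
  ultimately show ?case by simp
next
  case (tp_add f g)
  have cf: "continuous_on UNIV f" "continuous_on UNIV g" using tp_cont tp_add.hyps by auto
  have i1: "(\<lambda>z. complex_of_real (F z) * f z) integrable_on cbox (0,0) (2*pi,2*pi)"
    by (rule integrable_continuous, rule continuous_on_subset[of UNIV])
       (auto intro!: continuous_intros continuous_on_compose2[OF cont] cf)
  have i2: "(\<lambda>z. complex_of_real (F z) * g z) integrable_on cbox (0,0) (2*pi,2*pi)"
    by (rule integrable_continuous, rule continuous_on_subset[of UNIV])
       (auto intro!: continuous_intros continuous_on_compose2[OF cont] cf)
  have "(\<lambda>z. complex_of_real (F z) * (f z + g z)) = (\<lambda>z. complex_of_real (F z) * f z + complex_of_real (F z) * g z)"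
    by (auto simp: algebra_simps)
  then show ?case using Henstock_Kurzweil_Integration.integral_add[OF i1 i2] tp_add.IH by simp
next
  case (tp_scale f c)
  have "(\<lambda>z. complex_of_real (F z) * (c * f z)) = (\<lambda>z. c * (complex_of_real (F z) * f z))"
    by (auto simp: algebra_simps)
  then show ?case using tp_scale.IH by simp
qed


lemma exp_i_eq_real:
  assumes "exp (\<i> * complex_of_real a) = exp (\<i> * complex_of_real b)"
  shows "\<exists>k::int. a = b + 2 * pi * of_int k"
proof -
  obtain n :: int where "\<i> * complex_of_real a = \<i> * complex_of_real b + complex_of_real (of_int (2 * n) * pi) * \<i>"
    using assms[unfolded exp_eq] by auto
  then have "Im (\<i> * complex_of_real a) = Im (\<i> * complex_of_real b + complex_of_real (of_int (2 * n) * pi) * \<i>)"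
    by simp
  then have "a = b + 2 * pi * of_int n" by simp
  then show ?thesis by blast
qed

lemma Arg2pi_Arg: "w \<noteq> 0 \<Longrightarrow> \<exists>k::int. Arg2pi w = Arg w + 2 * pi * of_int k"
proof -
  assume w: "w \<noteq> 0"
  have a: "w = complex_of_real (norm w) * exp (\<i> * complex_of_real (Arg w))"
    using is_Arg_Arg[OF w] by (simp add: is_Arg_def)
  have b: "w = complex_of_real (norm w) * exp (\<i> * complex_of_real (Arg2pi w))"
    using Arg2pi[of w] by (simp add: is_Arg_def)
  have "exp (\<i> * complex_of_real (Arg2pi w)) = exp (\<i> * complex_of_real (Arg w))"
    using a b w by (metis mult_cancel_left norm_eq_zero of_real_eq_0_iff)
  then show ?thesis by (rule exp_i_eq_real)
qed

lemma Arg_exp_i: "\<exists>k::int. Arg (exp (\<i> * complex_of_real x)) = x + 2 * pi * of_int k"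
proof -
  let ?w = "exp (\<i> * complex_of_real x)"
  have w: "?w \<noteq> 0" by simp
  have n: "norm ?w = 1" by (simp add: norm_exp_i_times)
  have "?w = complex_of_real (norm ?w) * exp (\<i> * complex_of_real (Arg ?w))"
    using is_Arg_Arg[OF w] by (simp add: is_Arg_def)
  then have "exp (\<i> * complex_of_real (Arg ?w)) = ?w" using n by simp
  then show ?thesis by (rule exp_i_eq_real)
qed

definition iota :: "real \<times> real \<Rightarrow> complex \<times> complex" where
  "iota z = (exp (\<i> * complex_of_real (fst z)), exp (\<i> * complex_of_real (snd z)))"

definition Ft :: "(real \<times> real \<Rightarrow> real) \<Rightarrow> complex \<times> complex \<Rightarrow> real" where
  "Ft F w = F (Arg (fst w), Arg (snd w))"

lemma Ft_iota:
  assumes per: "torus_periodic F"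
  shows "Ft F (iota z) = F z"
proof -
  obtain k1 where k1: "Arg (exp (\<i> * complex_of_real (fst z))) = fst z + 2 * pi * of_int k1" using Arg_exp_i by blast
  obtain k2 where k2: "Arg (exp (\<i> * complex_of_real (snd z))) = snd z + 2 * pi * of_int k2" using Arg_exp_i by blast
  show ?thesis unfolding Ft_def iota_def using k1 k2 per_xy[OF per, of "fst z" k1 "snd z" k2] by simp
qed

lemma iota_sphere: "iota z \<in> sphere 0 1 \<times> sphere 0 1"
  by (simp add: iota_def norm_exp_i_times)

lemma branch_exists:
  assumes w: "w \<noteq> 0"
  shows "\<exists>\<theta>::complex \<Rightarrow> real. isCont \<theta> w \<and> (\<forall>v. v \<noteq> 0 \<longrightarrow> (\<exists>k::int. \<theta> v = Arg v + 2 * pi * of_int k))"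
proof (cases "w \<in> \<real>\<^sub>\<le>\<^sub>0")
  case True
  then have "w \<notin> \<real>\<^sub>\<ge>\<^sub>0" using w by (auto simp: complex_nonpos_Reals_iff complex_nonneg_Reals_iff complex_eq_iff)
  then show ?thesis using continuous_at_Arg2pi Arg2pi_Arg by blast
next
  case False
  then have "isCont Arg w" by (rule continuous_at_Arg)
  moreover have "\<exists>k::int. Arg v = Arg v + 2 * pi * of_int k" for v by (intro exI[of _ 0]) simp
  ultimately show ?thesis by blast
qed

lemma Ft_cont:
  assumes cont: "continuous_on UNIV F" and per: "torus_periodic F"
  shows "continuous_on (sphere 0 1 \<times> sphere 0 1) (Ft F)"
  unfolding continuous_on_eq_continuous_within
proof
  fix x assume x: "x \<in> sphere (0::complex) 1 \<times> sphere (0::complex) 1"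
  then have x1: "fst x \<noteq> 0" and x2: "snd x \<noteq> 0" by auto
  obtain \<theta>1 where t1: "isCont \<theta>1 (fst x)" "\<And>v. v \<noteq> 0 \<Longrightarrow> \<exists>k::int. \<theta>1 v = Arg v + 2 * pi * of_int k"
    using branch_exists[OF x1] by blast
  obtain \<theta>2 where t2: "isCont \<theta>2 (snd x)" "\<And>v. v \<noteq> 0 \<Longrightarrow> \<exists>k::int. \<theta>2 v = Arg v + 2 * pi * of_int k"
    using branch_exists[OF x2] by blast
  define g where "g w = F (\<theta>1 (fst w), \<theta>2 (snd w))" for w
  have "isCont (\<lambda>w. (\<theta>1 (fst w), \<theta>2 (snd w))) x"
    by (intro continuous_Pair isCont_o2[OF continuous_fst[OF continuous_ident]] isCont_o2[OF continuous_snd[OF continuous_ident]] t1(1) t2(1))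
  moreover have "isCont F y" for y using cont by (metis UNIV_I continuous_on_eq_continuous_at open_UNIV)
  ultimately have "isCont g x" unfolding g_def by (rule isCont_o2)
  then have "continuous (at x within sphere 0 1 \<times> sphere 0 1) g" by (rule continuous_at_imp_continuous_within)
  moreover have "g x' = Ft F x'" if "x' \<in> sphere 0 1 \<times> sphere 0 1" for x'
  proof -
    have "fst x' \<noteq> 0" "snd x' \<noteq> 0" using that by auto
    then obtain k1 k2 where "\<theta>1 (fst x') = Arg (fst x') + 2 * pi * of_int k1" "\<theta>2 (snd x') = Arg (snd x') + 2 * pi * of_int k2"
      using t1(2) t2(2) by blast
    then show ?thesis unfolding g_def Ft_def using per_xy[OF per] by simp
  qed
  ultimately show "continuous (at x within sphere 0 1 \<times> sphere 0 1) (Ft F)"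
    using continuous_transform_within[of x _ g 1 "Ft F"] x by auto
qed


lemma tp_cos: "(\<lambda>z. complex_of_real (cos (ip n m z))) \<in> TP"
proof -
  have "(\<lambda>z. (1/2) * ex n m z + (1/2) * ex (-n) (-m) z) \<in> TP"
    by (intro TP.tp_add TP.tp_scale TP.tp_exp)
  then show ?thesis
    by (rule tp_eq) (simp add: ex_def ip_neg cos_of_real[symmetric] cos_exp_eq field_simps)
qed

lemma tp_sin: "(\<lambda>z. complex_of_real (sin (ip n m z))) \<in> TP"
proof -
  have "(\<lambda>z. (1/(2*\<i>)) * ex n m z + (-1/(2*\<i>)) * ex (-n) (-m) z) \<in> TP"
    by (intro TP.tp_add TP.tp_scale TP.tp_exp)
  then show ?thesis
    by (rule tp_eq) (simp add: ex_def ip_neg sin_of_real[symmetric] sin_exp_eq field_simps)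
qed

lemma tp_linear:
  fixes f :: "complex \<times> complex \<Rightarrow> real"
  assumes lin: "bounded_linear f"
  shows "(\<lambda>z. complex_of_real (f (iota z))) \<in> TP"
proof -
  interpret f: bounded_linear f by (rule lin)
  have dec: "(a, b) = Re a *\<^sub>R (1, 0) + Im a *\<^sub>R (\<i>, 0) + Re b *\<^sub>R (0, 1) + Im b *\<^sub>R (0, \<i>)" for a b :: complex
    by (simp add: complex_eq_iff scaleR_conv_of_real)
  have fe: "f (a, b) = Re a * f (1, 0) + Im a * f (\<i>, 0) + Re b * f (0, 1) + Im b * f (0, \<i>)" for a b
  proof -
    have "f (a, b) = f (Re a *\<^sub>R (1, 0) + Im a *\<^sub>R (\<i>, 0) + Re b *\<^sub>R (0, 1) + Im b *\<^sub>R (0, \<i>))"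
      by (simp only: dec[symmetric])
    also have "\<dots> = Re a * f (1, 0) + Im a * f (\<i>, 0) + Re b * f (0, 1) + Im b * f (0, \<i>)"
      by (simp only: f.add f.scale real_scaleR_def)
    finally show ?thesis .
  qed
  have c1: "(\<lambda>z. complex_of_real (cos (fst z))) \<in> TP" using tp_cos[of 1 0] by (rule tp_eq) (simp add: ip_def)
  have s1: "(\<lambda>z. complex_of_real (sin (fst z))) \<in> TP" using tp_sin[of 1 0] by (rule tp_eq) (simp add: ip_def)
  have c2: "(\<lambda>z. complex_of_real (cos (snd z))) \<in> TP" using tp_cos[of 0 1] by (rule tp_eq) (simp add: ip_def)
  have s2: "(\<lambda>z. complex_of_real (sin (snd z))) \<in> TP" using tp_sin[of 0 1] by (rule tp_eq) (simp add: ip_def)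
  have "(\<lambda>z. complex_of_real (f (1,0)) * complex_of_real (cos (fst z)) + complex_of_real (f (\<i>,0)) * complex_of_real (sin (fst z))
           + complex_of_real (f (0,1)) * complex_of_real (cos (snd z)) + complex_of_real (f (0,\<i>)) * complex_of_real (sin (snd z))) \<in> TP"
    by (intro TP.tp_add TP.tp_scale c1 s1 c2 s2)
  then show ?thesis
  proof (rule tp_eq)
    fix z :: "real \<times> real"
    have "f (iota z) = cos (fst z) * f (1, 0) + sin (fst z) * f (\<i>, 0) + cos (snd z) * f (0, 1) + sin (snd z) * f (0, \<i>)"
      unfolding iota_def by (subst fe) (simp add: Re_exp Im_exp)
    then show "complex_of_real (f (1,0)) * complex_of_real (cos (fst z)) + complex_of_real (f (\<i>,0)) * complex_of_real (sin (fst z))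
           + complex_of_real (f (0,1)) * complex_of_real (cos (snd z)) + complex_of_real (f (0,\<i>)) * complex_of_real (sin (snd z))
          = complex_of_real (f (iota z))"
      by (simp add: algebra_simps)
  qed
qed

lemma rpf_tp:
  fixes P :: "complex \<times> complex \<Rightarrow> real"
  shows "real_polynomial_function P \<Longrightarrow> (\<lambda>z. complex_of_real (P (iota z))) \<in> TP"
proof (induction rule: real_polynomial_function.induct)
  case (linear f) then show ?case by (rule tp_linear)
next
  case (const c) then show ?case using tp_const[of "complex_of_real c"] by simp
next
  case (add f g) show ?case by (rule tp_eq[OF TP.tp_add[OF add.IH]]) simp
next
  case (mult f g) show ?case by (rule tp_eq[OF tp_mult[OF mult.IH]]) simp
qed


lemma fourier_unique:
  fixes F :: "real \<times> real \<Rightarrow> real"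
  assumes cont: "continuous_on UNIV F" and per: "torus_periodic F"
    and zero: "\<And>n m. fourier_coeff F n m = 0"
  shows "F z = 0"
proof -
  define B where "B = cbox (0::real, 0::real) (2 * pi, 2 * pi)"
  define Ic where "Ic = integral B (\<lambda>z. complex_of_real (F z) * complex_of_real (F z))"
  define c where "c = integral B (\<lambda>z. \<bar>F z\<bar>)"
  have cF: "continuous_on S F" for S using cont continuous_on_subset by blast
  have c0: "c \<ge> 0" unfolding c_def
    by (rule Henstock_Kurzweil_Integration.integral_nonneg) (auto simp: B_def intro!: integrable_continuous continuous_intros cF)
  have bound: "norm Ic \<le> e * c" if e: "e > 0" for e
  proof -
    have S: "compact (sphere (0::complex) 1 \<times> sphere (0::complex) 1)"
      by (intro compact_Times compact_sphere)
    obtain P where P: "real_polynomial_function P" "\<And>w. w \<in> sphere 0 1 \<times> sphere 0 1 \<Longrightarrow> \<bar>Ft F w - P w\<bar> < e"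
      using Stone_Weierstrass_real_polynomial_function[OF S Ft_cont[OF cont per] e] by blast
    define g where "g z = complex_of_real (P (iota z))" for z
    have gT: "g \<in> TP" unfolding g_def by (rule rpf_tp[OF P(1)])
    have cg: "continuous_on S g" for S using tp_cont[OF gT] continuous_on_subset by blast
    have ap: "\<bar>F z - P (iota z)\<bar> < e" for z
      using P(2)[OF iota_sphere[of z]] Ft_iota[OF per, of z] by simp
    have o: "integral B (\<lambda>z. complex_of_real (F z) * g z) = 0"
      unfolding B_def by (rule tp_orth[OF cont zero gT])
    have i1: "(\<lambda>z. complex_of_real (F z) * complex_of_real (F z)) integrable_on B"
      unfolding B_def by (rule integrable_continuous) (auto intro!: continuous_intros cF)
    have i2: "(\<lambda>z. complex_of_real (F z) * g z) integrable_on B"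
      unfolding B_def by (rule integrable_continuous) (auto intro!: continuous_intros cF cg)
    have "Ic = integral B (\<lambda>z. complex_of_real (F z) * complex_of_real (F z)) - integral B (\<lambda>z. complex_of_real (F z) * g z)"
      using o by (simp add: Ic_def)
    also have "\<dots> = integral B (\<lambda>z. complex_of_real (F z) * complex_of_real (F z) - complex_of_real (F z) * g z)"
      by (rule Henstock_Kurzweil_Integration.integral_diff[OF i1 i2, symmetric])
    finally have Ieq: "Ic = integral B (\<lambda>z. complex_of_real (F z) * complex_of_real (F z) - complex_of_real (F z) * g z)" .
    have "norm Ic \<le> integral B (\<lambda>z. \<bar>F z\<bar> * e)"
      unfolding Ieq
    proof (rule integral_norm_bound_integral)
      show "(\<lambda>z. complex_of_real (F z) * complex_of_real (F z) - complex_of_real (F z) * g z) integrable_on B"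
        unfolding B_def by (rule integrable_continuous) (auto intro!: continuous_intros cF cg)
      show "(\<lambda>z. \<bar>F z\<bar> * e) integrable_on B"
        unfolding B_def by (rule integrable_continuous) (auto intro!: continuous_intros cF)
      fix z
      have "norm (complex_of_real (F z) * complex_of_real (F z) - complex_of_real (F z) * g z)
          = \<bar>F z\<bar> * \<bar>F z - P (iota z)\<bar>"
      proof -
        have "complex_of_real (F z) * complex_of_real (F z) - complex_of_real (F z) * g z
            = complex_of_real (F z * (F z - P (iota z)))" by (simp add: g_def algebra_simps)
        then show ?thesis by (simp only: norm_of_real abs_mult)
      qed
      also have "\<dots> \<le> \<bar>F z\<bar> * e" using ap[of z] by (intro mult_left_mono) auto
      finally show "norm (complex_of_real (F z) * complex_of_real (F z) - complex_of_real (F z) * g z) \<le> \<bar>F z\<bar> * e" .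
    qed
    also have "integral B (\<lambda>z. \<bar>F z\<bar> * e) = e * c"
      by (simp add: c_def mult.commute)
    finally show ?thesis .
  qed
  have "Ic = 0"
  proof (rule ccontr)
    assume "Ic \<noteq> 0"
    then have np: "norm Ic > 0" by simp
    define e where "e = norm Ic / (2 * (c + 1))"
    have e: "e > 0" using np c0 by (simp add: e_def)
    have "norm Ic \<le> e * c" by (rule bound[OF e])
    also have "e * c < e * (2 * (c + 1))" using e c0 by (intro mult_strict_left_mono) auto
    also have "e * (2 * (c + 1)) = norm Ic" using c0 by (simp add: e_def)
    finally show False by simp
  qed
  have ir: "(\<lambda>z. F z * F z) integrable_on B"
    unfolding B_def by (rule integrable_continuous) (auto intro!: continuous_intros cF)
  have "((\<lambda>z. complex_of_real (F z * F z)) has_integral complex_of_real (integral B (\<lambda>z. F z * F z))) B"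
    by (rule has_integral_of_real[OF integrable_integral[OF ir]])
  then have "complex_of_real (integral B (\<lambda>z. F z * F z)) = Ic"
    unfolding Ic_def by (simp add: integral_unique)
  then have "integral B (\<lambda>z. F z * F z) = 0" using \<open>Ic = 0\<close> by simp
  then have hi: "((\<lambda>z. F z * F z) has_integral 0) B" using integrable_integral[OF ir] by simp
  have box: "F y = 0" if y: "y \<in> B" for y
  proof -
    have "box (0::real, 0::real) (2 * pi, 2 * pi) \<noteq> {}"
      by (simp add: box_ne_empty inner_Pair Basis_prod_def)
    then have "F y * F y = 0"
      using has_integral_0_cbox_imp_0[of "(0,0)" "(2 * pi, 2 * pi)" "\<lambda>z. F z * F z" y] hi y
      by (auto simp: B_def intro!: continuous_intros cF)
    then show ?thesis by simp
  qed
  obtain m n :: int where mn: "(fst z - 2 * pi * of_int m, snd z - 2 * pi * of_int n) \<in> B"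
    using reduce_box[of z] unfolding B_def by blast
  have "F z = F ((fst z - 2 * pi * of_int m, snd z - 2 * pi * of_int n) + (2 * pi * of_int m, 2 * pi * of_int n))"
    by simp
  also have "\<dots> = F (fst z - 2 * pi * of_int m, snd z - 2 * pi * of_int n)"
    by (rule per_int_shift[OF per])
  also have "\<dots> = 0" by (rule box[OF mn])
  finally show ?thesis .
qed


lemma fourier_coeff_diff:
  assumes c1: "continuous_on UNIV G1" and c2: "continuous_on UNIV G2"
  shows "fourier_coeff (\<lambda>z. G1 z - G2 z) n m = fourier_coeff G1 n m - fourier_coeff G2 n m"
proof -
  have cG1: "continuous_on S G1" for S using c1 continuous_on_subset by blast
  have cG2: "continuous_on S G2" for S using c2 continuous_on_subset by blast
  let ?B = "cbox (0::real, 0::real) (2 * pi, 2 * pi)"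
  let ?e = "\<lambda>p. exp (- \<i> * complex_of_real (ip n m p))"
  have i1: "(\<lambda>p. complex_of_real (G1 p) * ?e p) integrable_on ?B"
    by (rule integrable_continuous) (auto simp: ip_def intro!: continuous_intros cG1)
  have i2: "(\<lambda>p. complex_of_real (G2 p) * ?e p) integrable_on ?B"
    by (rule integrable_continuous) (auto simp: ip_def intro!: continuous_intros cG2)
  have "(\<lambda>p. complex_of_real (G1 p - G2 p) * ?e p) = (\<lambda>p. complex_of_real (G1 p) * ?e p - complex_of_real (G2 p) * ?e p)"
    by (auto simp: algebra_simps)
  then show ?thesis
    unfolding fourier_coeff_ip
    using Henstock_Kurzweil_Integration.integral_diff[OF i1 i2] by (simp add: diff_divide_distrib)
qed

lemma gen_if_good:
  fixes \<alpha> \<beta> :: real and G :: "real \<times> real \<Rightarrow> real"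
  assumes per: "torus_periodic G" and sm: "smooth2 G"
    and good: "good_observation G \<alpha> \<beta>"
  shows "zgen (fourier_support G) = UNIV"
proof (rule ccontr)
  assume H: "zgen (fourier_support G) \<noteq> UNIV"
  obtain \<theta>1 \<theta>2 :: real where th: "\<not> (\<theta>1 \<in> \<int> \<and> \<theta>2 \<in> \<int>)"
    and dual: "\<And>s. s \<in> zgen (fourier_support G) \<Longrightarrow> of_int (fst s) * \<theta>1 + of_int (snd s) * \<theta>2 \<in> \<int>"
    using proper_subgroup_dual[OF H] by blast
  define w where "w = (2 * pi * \<theta>1, 2 * pi * \<theta>2)"
  have cont: "continuous_on UNIV G" by (rule smooth2_continuous[OF sm])
  have contw: "continuous_on UNIV (\<lambda>z. G (z + w))"
    by (rule continuous_on_compose2[OF cont]) (auto intro!: continuous_intros)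
  define F where "F z = G (z + w) - G z" for z
  have contF: "continuous_on UNIV F" unfolding F_def by (intro continuous_intros contw cont)
  have s1: "G (q + (2 * pi, 0)) = G q" for q
    using per by (cases q) (simp add: torus_periodic_def)
  have s2: "G (q + (0, 2 * pi)) = G q" for q
    using per by (cases q) (simp add: torus_periodic_def)
  have perF: "torus_periodic F"
    unfolding torus_periodic_def F_def
  proof (intro allI conjI)
    fix x y
    have "(x + 2 * pi, y) + w = ((x, y) + w) + (2 * pi, 0)" "(x + 2 * pi, y) = (x, y) + (2 * pi, 0)" by simp_all
    then show "G ((x + 2 * pi, y) + w) - G (x + 2 * pi, y) = G ((x, y) + w) - G (x, y)"
      using s1 by metis
    have "(x, y + 2 * pi) + w = ((x, y) + w) + (0, 2 * pi)" "(x, y + 2 * pi) = (x, y) + (0, 2 * pi)" by simp_all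
    then show "G ((x, y + 2 * pi) + w) - G (x, y + 2 * pi) = G ((x, y) + w) - G (x, y)"
      using s2 by metis
  qed
  have zero: "fourier_coeff F n m = 0" for n m
  proof -
    have "fourier_coeff F n m = fourier_coeff (\<lambda>z. G (z + w)) n m - fourier_coeff G n m"
      unfolding F_def by (rule fourier_coeff_diff[OF contw cont])
    also have "\<dots> = (exp (\<i> * complex_of_real (ip n m w)) - 1) * fourier_coeff G n m"
      using fourier_coeff_shift[OF cont per, of w n m] by (simp add: algebra_simps)
    also have "\<dots> = 0"
    proof (cases "fourier_coeff G n m = 0")
      case False
      then have "(n, m) \<in> zgen (fourier_support G)"
        by (intro zgen_gen) (simp add: fourier_support_def)
      then have "of_int n * \<theta>1 + of_int m * \<theta>2 \<in> \<int>" using dual by fastforce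
      then obtain k :: int where k: "of_int n * \<theta>1 + of_int m * \<theta>2 = of_int k" by (auto elim: Ints_cases)
      have "ip n m w = of_int k * (pi * 2)"
        unfolding ip_def w_def using k by (simp add: algebra_simps) (metis distrib_left mult.commute mult.left_commute)
      then have "exp (\<i> * complex_of_real (ip n m w)) = 1"
        using exp_2pi_1_int[of k] by simp
      then show ?thesis by simp
    qed simp
    finally show ?thesis .
  qed
  have inv: "G (z + w) = G z" for z
    using fourier_unique[OF contF perF zero, of z] by (simp add: F_def)
  obtain N \<tau> where "takens_embedding G \<alpha> \<beta> N \<tau>"
    using good unfolding good_observation_def by blast
  then have injT: "\<forall>p q. (\<forall>k\<le>N. G (p + (real k * \<tau>) *\<^sub>R (\<alpha>, \<beta>)) = G (q + (real k * \<tau>) *\<^sub>R (\<alpha>, \<beta>)))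
              \<longrightarrow> torus_eq p q"
    unfolding takens_embedding_def lin_flow_eq by (rule conjunct1)
  have "\<forall>k\<le>N. G (0 + (real k * \<tau>) *\<^sub>R (\<alpha>, \<beta>)) = G (w + (real k * \<tau>) *\<^sub>R (\<alpha>, \<beta>))"
  proof (intro allI impI)
    fix k :: nat
    show "G (0 + (real k * \<tau>) *\<^sub>R (\<alpha>, \<beta>)) = G (w + (real k * \<tau>) *\<^sub>R (\<alpha>, \<beta>))"
      using inv[of "(real k * \<tau>) *\<^sub>R (\<alpha>, \<beta>)"] by (simp only: add.commute add_0_left)
  qed
  then have "torus_eq 0 w" using injT by blast
  then obtain m n :: int where "0 - 2 * pi * \<theta>1 = 2 * pi * of_int m" "0 - 2 * pi * \<theta>2 = 2 * pi * of_int n"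
    unfolding torus_eq_def w_def by auto
  then have "pi * (\<theta>1 + of_int m) = 0" "pi * (\<theta>2 + of_int n) = 0" by (simp_all add: algebra_simps)
  then have "\<theta>1 + of_int m = 0" "\<theta>2 + of_int n = 0" by simp_all
  then have "\<theta>1 = of_int (- m)" "\<theta>2 = of_int (- n)" by simp_all
  then show False using th by simp
qed

theorem theorem2:
  fixes \<alpha> \<beta> :: real and G :: "real \<times> real \<Rightarrow> real"
  assumes "\<alpha> / \<beta> \<notin> \<rat>"
    and "torus_periodic G"
    and "smooth2 G"
  shows "good_observation G \<alpha> \<beta> \<longleftrightarrow> zgen (fourier_support G) = UNIV"
  using gen_if_good[OF assms(2,3)] good_if_gen[OF assms] by blast


end
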